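(* Let $w$, $H$ and $m\ge2$ be fixed (not depending on $n$). Then $\sigma^2_{m,n;r}=O(n^{2m-r})$ as $n\to\infty$ for every $r\in[m]$. Moreover the following are equivalent: (i) $\rho_{m,n;1}=\Omega(1)$ as $n\to\infty$; (ii) $\sigma^2_{m,n;1}=0$ (for some, equivalently all, $n\ge m$); (iii) $\sum_{H'\in\mathcal G_H(\{1,\dots,m\})}\mathbb E\big[\prod_{(s,t)\in E(H')}w(U_s,U_t)\mid U_1\big]$ is almost surely constant; (iv) for almost every $x\in[0,1]$, $$\frac1m\sum_{i=1}^m\mathbb E\Big[\prod_{(s,t)\in E(H)}w(U_s,U_t)\,\Big|\,U_i=x\Big]=\mathbb E\Big[\prod_{(s,t)\in E(H)}w(U_s,U_t)\Big].$$
   Context: $w:[0,1]^2\to[0,1]$ is symmetric and measurable; $U_1,U_2,\dots$ are i.i.d. $\mathrm{Uniform}[0,1]$. $H$ is a non-empty simple graph on the vertex set $\{1,\dots,m\}$; $E(\cdot)$ denotes the edge set of a graph; for a finite set $S$, $\mathcal G_H(S)$ is the collection of all subgraphs of the complete graph on $S$ that are isomorphic to $H$. For $r\in[m]$ and $n\ge m$, $\sigma^2_{m,n;r}:=\binom mr\binom nm\binom{n-r}{m-r}\,\mathrm{Var}\,\mathbb E\Big[\sum_{H'\in\mathcal G_H(\{1,\dots,m\})}\prod_{(s,t)\in E(H')}w(U_s,U_t)\,\Big|\,U_1,\dots,U_r\Big]$, and $\rho_{m,n;1}:=\sum_{r=2}^m\sigma^2_{m,n;r}/\sigma^2_{m,n;1}$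 with the convention $a/0:=+\infty$ for $a\ge0$. *)

theory Defs
  imports "HOL-Probability.Probability" "HOL-Library.Landau_Symbols"
begin

definition unifM :: "real measure" where
  "unifM = restrict_space lborel {0..1}"

definition unifPi :: "nat set \<Rightarrow> (nat \<Rightarrow> real) measure" where
  "unifPi I = PiM I (\<lambda>_. unifM)"

text \<open>Conditional expectation of F(U_1,...,U_m) given (U_i)_{i in I}, evaluated at
  U_i = u i (i in I): integrate out the remaining independent coordinates.\<close>
definition condE :: "nat \<Rightarrow> ((nat \<Rightarrow> real) \<Rightarrow> real) \<Rightarrow> nat set \<Rightarrow> (nat \<Rightarrow> real) \<Rightarrow> real" where
  "condE m F I u = (\<integral>v. F (\<lambda>i. if i \<in> I then u i else v i) \<partial>unifPi ({1..m} - I))"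

definition Var :: "'a measure \<Rightarrow> ('a \<Rightarrow> real) \<Rightarrow> real" where
  "Var M X = (\<integral>x. (X x - (\<integral>y. X y \<partial>M))\<^sup>2 \<partial>M)"

text \<open>Graphs on vertex sets of naturals are given by their edge sets (2-element sets).
  Copies of H (a graph on {1..m}) in the complete graph on S.\<close>
definition copiesH :: "nat \<Rightarrow> nat set set \<Rightarrow> nat set \<Rightarrow> nat set set set" where
  "copiesH m H S = {(\<lambda>e. \<sigma> ` e) ` H | \<sigma>. bij_betw \<sigma> {1..m} S}"

definition edgeprod :: "(real \<Rightarrow> real \<Rightarrow> real) \<Rightarrow> nat set set \<Rightarrow> (nat \<Rightarrow> real) \<Rightarrow> real" where
  "edgeprod w E u = (\<Prod>e\<in>E. w (u (Min e)) (u (Max e)))"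

definition kernelH :: "(real \<Rightarrow> real \<Rightarrow> real) \<Rightarrow> nat \<Rightarrow> nat set set \<Rightarrow> (nat \<Rightarrow> real) \<Rightarrow> real" where
  "kernelH w m H u = (\<Sum>H'\<in>copiesH m H {1..m}. edgeprod w H' u)"

definition sigma2 :: "(real \<Rightarrow> real \<Rightarrow> real) \<Rightarrow> nat \<Rightarrow> nat set set \<Rightarrow> nat \<Rightarrow> nat \<Rightarrow> real" where
  "sigma2 w m H n r =
     real (m choose r) * real (n choose m) * real ((n - r) choose (m - r)) *
     Var (unifPi {1..r}) (condE m (kernelH w m H) {1..r})"

definition rho :: "(real \<Rightarrow> real \<Rightarrow> real) \<Rightarrow> nat \<Rightarrow> nat set set \<Rightarrow> nat \<Rightarrow> ereal" where
  "rho w m H n =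
     (if sigma2 w m H n 1 = 0 then \<infinity>
      else ereal ((\<Sum>r=2..m. sigma2 w m H n r) / sigma2 w m H n 1))"

end

theory Submission
  imports Defs "HOL-Combinatorics.Permutations"
begin


lemma prob_unifM: "prob_space unifM"
  unfolding unifM_def
  by (rule prob_spaceI) (simp add: emeasure_restrict_space space_restrict_space)

lemma space_unifM[simp]: "space unifM = {0..1}"
  by (simp add: unifM_def space_restrict_space)

lemma prob_PiU: "prob_space (PiM J (\<lambda>_. unifM))"
  by (rule prob_space_PiM) (simp add: prob_unifM)

lemma space_PiU_in: "v \<in> space (PiM J (\<lambda>_. unifM)) \<Longrightarrow> i \<in> J \<Longrightarrow> v i \<in> {0..1}"
  by (auto simp: space_PiM PiE_iff)

definition goodE :: "nat \<Rightarrow> nat set set \<Rightarrow> bool" where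
  "goodE m E \<longleftrightarrow> finite E \<and> (\<forall>e\<in>E. e \<subseteq> {1..m} \<and> card e = 2)"

lemma card2_MinMax:
  assumes "card (e::nat set) = 2"
  shows "e = {Min e, Max e}" "Min e < Max e" "finite e"
proof -
  obtain a b where e: "e = {a,b}" "a \<noteq> b" using assms by (auto simp: card_2_iff)
  show "finite e" using e by simp
  have mm: "Min e = min a b" "Max e = max a b" using e by simp_all
  show "Min e < Max e" using mm e(2) by linarith
  show "e = {Min e, Max e}" using mm e by (auto simp: min_def max_def)
qed

lemma goodE_MinMax:
  assumes "goodE m E" "e \<in> E"
  shows "Min e \<in> {1..m}" "Max e \<in> {1..m}" "Min e \<in> e" "Max e \<in> e"
proof -
  have c: "card e = 2" "e \<subseteq> {1..m}" using assms by (auto simp: goodE_def)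
  have "e = {Min e, Max e}" using c(1) by (rule card2_MinMax)
  then show "Min e \<in> e" "Max e \<in> e" by (metis insertI1, metis insertI1 insert_commute)
  then show "Min e \<in> {1..m}" "Max e \<in> {1..m}" using c(2) by auto
qed

lemma edgeprod_cong:
  assumes "\<forall>e\<in>E. Min e \<in> A \<and> Max e \<in> A" "\<And>i. i \<in> A \<Longrightarrow> u i = u' i"
  shows "edgeprod w E u = edgeprod w E u'"
  unfolding edgeprod_def using assms by (intro prod.cong) auto

lemma edgeprod_bounds:
  assumes w_range: "\<And>x y. x \<in> {0..1} \<Longrightarrow> y \<in> {0..1} \<Longrightarrow> 0 \<le> w x y \<and> w x y \<le> 1"
    and "\<forall>e\<in>E. u (Min e) \<in> {0..1} \<and> u (Max e) \<in> {0..1}"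
  shows "0 \<le> edgeprod w E u \<and> edgeprod w E u \<le> 1"
proof -
  have h: "\<forall>e\<in>E. 0 \<le> w (u (Min e)) (u (Max e)) \<and> w (u (Min e)) (u (Max e)) \<le> 1"
    using assms by blast
  show ?thesis unfolding edgeprod_def
    by (rule conjI, rule prod_nonneg, use h in blast, rule prod_le_1, use h in blast)
qed

lemma meas_coord:
  assumes "k \<in> insert j J"
  shows "(\<lambda>p. if k = j then fst p else snd p k) \<in> measurable (N \<Otimes>\<^sub>M PiM J (\<lambda>_. N)) N"
proof (cases "k = j")
  case True then show ?thesis by (simp add: measurable_fst)
next
  case False
  then have k: "k \<in> J" using assms by auto
  have eq: "(\<lambda>p. if k = j then fst p else snd p k) = (\<lambda>v. v k) \<circ> snd" using False by auto
  have "(\<lambda>v. v k) \<circ> snd \<in> measurable (N \<Otimes>\<^sub>M PiM J (\<lambda>_. N)) N"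
    by (rule measurable_comp[OF measurable_snd measurable_component_singleton[OF k]])
  then show ?thesis by (simp only: eq)
qed

lemma meas_edgeprod_pair:
  assumes w_meas: "(\<lambda>(x, y). w x y) \<in> borel_measurable (unifM \<Otimes>\<^sub>M unifM)"
    and E: "\<forall>e\<in>E. Min e \<in> insert j J \<and> Max e \<in> insert j J"
  shows "(\<lambda>p. edgeprod w E (\<lambda>i. if i = j then fst p else snd p i))
     \<in> borel_measurable (unifM \<Otimes>\<^sub>M PiM J (\<lambda>_. unifM))"
  unfolding edgeprod_def
proof (rule borel_measurable_prod)
  fix e assume "e \<in> E"
  then have a: "Min e \<in> insert j J" and b: "Max e \<in> insert j J" using E by auto
  have "(\<lambda>p. ((\<lambda>i. if i = j then fst p else snd p i) (Min e), (\<lambda>i. if i = j then fst p else snd p i) (Max e)))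
     \<in> measurable (unifM \<Otimes>\<^sub>M PiM J (\<lambda>_. unifM)) (unifM \<Otimes>\<^sub>M unifM)"
    using meas_coord[OF a] meas_coord[OF b] by (intro measurable_Pair) auto
  from measurable_comp[OF this w_meas]
  show "(\<lambda>p. w ((\<lambda>i. if i = j then fst p else snd p i) (Min e)) ((\<lambda>i. if i = j then fst p else snd p i) (Max e)))
     \<in> borel_measurable (unifM \<Otimes>\<^sub>M PiM J (\<lambda>_. unifM))" by (simp add: comp_def)
qed




lemma condE_single: "condE m F {j} (\<lambda>_. x) = (\<integral>v. F (\<lambda>i. if i = j then x else v i) \<partial>PiM ({1..m}-{j}) (\<lambda>_. unifM))"
  by (simp add: condE_def unifPi_def)

lemma meas_int:
  fixes f :: "real \<Rightarrow> (nat \<Rightarrow> real) \<Rightarrow> real"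
  assumes "(\<lambda>p. f (fst p) (snd p)) \<in> borel_measurable (unifM \<Otimes>\<^sub>M PiM J (\<lambda>_. unifM))"
  shows "(\<lambda>x. \<integral>v. f x v \<partial>PiM J (\<lambda>_. unifM)) \<in> borel_measurable unifM"
proof -
  interpret P: prob_space "PiM J (\<lambda>_. unifM)" by (rule prob_PiU)
  have eq: "case_prod f = (\<lambda>p. f (fst p) (snd p))" by auto
  show ?thesis by (rule P.borel_measurable_lebesgue_integral) (simp only: eq assms)
qed

lemma int_sect:
  fixes B :: real
  assumes g: "g \<in> borel_measurable (unifM \<Otimes>\<^sub>M PiM J (\<lambda>_. unifM))" and x: "x \<in> {0..1}"
   and b: "\<And>v. v \<in> space (PiM J (\<lambda>_. unifM)) \<Longrightarrow> \<bar>g (x, v)\<bar> \<le> B"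
  shows "integrable (PiM J (\<lambda>_. unifM)) (\<lambda>v. g (x, v))"
proof -
  interpret P: prob_space "PiM J (\<lambda>_. unifM)" by (rule prob_PiU)
  have "(\<lambda>v. g (x,v)) \<in> borel_measurable (PiM J (\<lambda>_. unifM))"
    using measurable_comp[OF measurable_Pair1'[of x unifM] g] x by (simp add: comp_def)
  then show ?thesis by (intro P.integrable_const_bound[where B=B]) (auto intro!: AE_I2 b)
qed

lemma goodE_MM:
  assumes "goodE m E" "j \<in> {1..m}"
  shows "\<forall>e\<in>E. Min e \<in> insert j ({1..m}-{j}) \<and> Max e \<in> insert j ({1..m}-{j})"
  using goodE_MinMax[OF assms(1)] assms(2) by auto

lemma edge_inrange:
  assumes "goodE m E" "j \<in> {1..m}" "x \<in> {0..1}" "v \<in> space (PiM ({1..m}-{j}) (\<lambda>_. unifM))"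
  shows "\<forall>e\<in>E. (\<lambda>i. if i = j then x else v i) (Min e) \<in> {0..1} \<and> (\<lambda>i. if i = j then x else v i) (Max e) \<in> {0..1}"
proof
  fix e assume e: "e \<in> E"
  have "\<And>k. k \<in> {1..m} \<Longrightarrow> (\<lambda>i. if i = j then x else v i) k \<in> {0..1}"
    using assms(3) space_PiU_in[OF assms(4)] by auto
  then show "(\<lambda>i. if i = j then x else v i) (Min e) \<in> {0..1} \<and> (\<lambda>i. if i = j then x else v i) (Max e) \<in> {0..1}"
    using goodE_MinMax[OF assms(1) e] by blast
qed

locale wsetup =
  fixes w :: "real \<Rightarrow> real \<Rightarrow> real" and m :: nat
  assumes w_meas: "(\<lambda>(x, y). w x y) \<in> borel_measurable (unifM \<Otimes>\<^sub>M unifM)"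
    and w_sym: "\<And>x y. x \<in> {0..1} \<Longrightarrow> y \<in> {0..1} \<Longrightarrow> w x y = w y x"
    and w_range: "\<And>x y. x \<in> {0..1} \<Longrightarrow> y \<in> {0..1} \<Longrightarrow> 0 \<le> w x y \<and> w x y \<le> 1"
begin

lemma E_meas_pair:
  assumes "goodE m E" "j \<in> {1..m}"
  shows "(\<lambda>p. edgeprod w E (\<lambda>i. if i = j then fst p else snd p i))
     \<in> borel_measurable (unifM \<Otimes>\<^sub>M PiM ({1..m}-{j}) (\<lambda>_. unifM))"
  by (rule meas_edgeprod_pair[OF w_meas goodE_MM[OF assms]])

lemma E_int:
  assumes "goodE m E" "j \<in> {1..m}" "x \<in> {0..1}"
  shows "integrable (PiM ({1..m}-{j}) (\<lambda>_. unifM)) (\<lambda>v. edgeprod w E (\<lambda>i. if i = j then x else v i))"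
proof -
  have "integrable (PiM ({1..m}-{j}) (\<lambda>_. unifM))
     (\<lambda>v. (\<lambda>p. edgeprod w E (\<lambda>i. if i = j then fst p else snd p i)) (x, v))"
  proof (rule int_sect[OF E_meas_pair[OF assms(1,2)] assms(3)])
    fix v assume v: "v \<in> space (PiM ({1..m}-{j}) (\<lambda>_. unifM))"
    show "\<bar>(\<lambda>p. edgeprod w E (\<lambda>i. if i = j then fst p else snd p i)) (x, v)\<bar> \<le> 1"
      using edgeprod_bounds[of w, OF w_range edge_inrange[OF assms v]] unfolding fst_conv snd_conv by (simp add: abs_le_iff)
  qed
  then show ?thesis unfolding fst_conv snd_conv .
qed

lemma E_bounds:
  assumes "goodE m E" "j \<in> {1..m}" "x \<in> {0..1}"
  shows "0 \<le> condE m (edgeprod w E) {j} (\<lambda>_. x) \<and> condE m (edgeprod w E) {j} (\<lambda>_. x) \<le> 1"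
proof -
  interpret P: prob_space "PiM ({1..m}-{j}) (\<lambda>_. unifM)" by (rule prob_PiU)
  have b: "AE v in PiM ({1..m}-{j}) (\<lambda>_. unifM). 0 \<le> edgeprod w E (\<lambda>i. if i = j then x else v i) \<and>
      edgeprod w E (\<lambda>i. if i = j then x else v i) \<le> 1"
    by (rule AE_I2) (rule edgeprod_bounds[of w, OF w_range edge_inrange[OF assms]])
  show ?thesis unfolding condE_single
    using P.integral_ge_const[OF E_int[OF assms], of 0] P.integral_le_const[OF E_int[OF assms], of 1] b
    by (auto elim: AE_mp)
qed

lemma E_meas:
  assumes "goodE m E" "j \<in> {1..m}"
  shows "(\<lambda>x. condE m (edgeprod w E) {j} (\<lambda>_. x)) \<in> borel_measurable unifM"
  unfolding condE_single
  using meas_int[where f="\<lambda>x v. edgeprod w E (\<lambda>i. if i = j then x else v i)", OF E_meas_pair[OF assms]]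
  by simp

end



definition Tc :: "(nat \<Rightarrow> nat) \<Rightarrow> nat set set \<Rightarrow> nat set set" where
  "Tc \<sigma> H = (\<lambda>e. \<sigma> ` e) ` H"

lemma Tc_comp: "Tc (\<sigma> \<circ> \<rho>) H = Tc \<sigma> (Tc \<rho> H)"
  by (simp add: Tc_def image_image image_comp)

lemma Tc_id: "Tc id H = H"
  by (simp add: Tc_def)

lemma copies_perm:
  assumes "goodE m H"
  shows "copiesH m H {1..m} = (\<lambda>\<sigma>. Tc \<sigma> H) ` {\<sigma>. \<sigma> permutes {1..m}}"
proof
  show "copiesH m H {1..m} \<subseteq> (\<lambda>\<sigma>. Tc \<sigma> H) ` {\<sigma>. \<sigma> permutes {1..m}}"
  proof
    fix H' assume "H' \<in> copiesH m H {1..m}"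
    then obtain \<sigma> where H': "H' = (\<lambda>e. \<sigma> ` e) ` H" and b: "bij_betw \<sigma> {1..m} {1..m}"
      by (auto simp: copiesH_def)
    define \<sigma>' where "\<sigma>' = (\<lambda>i. if i \<in> {1..m} then \<sigma> i else i)"
    have "bij_betw \<sigma>' {1..m} {1..m} = bij_betw \<sigma> {1..m} {1..m}"
      by (rule bij_betw_cong) (auto simp: \<sigma>'_def)
    with b have b': "bij_betw \<sigma>' {1..m} {1..m}" by simp
    have p: "\<sigma>' permutes {1..m}"
      by (rule bij_imp_permutes[OF b']) (auto simp: \<sigma>'_def)
    have eqH: "\<And>e. e \<in> H \<Longrightarrow> \<sigma>' ` e = \<sigma> ` e"
    proof -
      fix e assume "e \<in> H"
      then have "e \<subseteq> {1..m}" using assms unfolding goodE_def by blast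
      then show "\<sigma>' ` e = \<sigma> ` e" unfolding \<sigma>'_def by (intro image_cong) auto
    qed
    have "H' = Tc \<sigma>' H" unfolding H' Tc_def
    proof (rule image_cong[OF refl])
      fix e assume "e \<in> H" then show "\<sigma> ` e = \<sigma>' ` e" using eqH by simp
    qed
    then show "H' \<in> (\<lambda>\<sigma>. Tc \<sigma> H) ` {\<sigma>. \<sigma> permutes {1..m}}" using p by blast
  qed
next
  show "(\<lambda>\<sigma>. Tc \<sigma> H) ` {\<sigma>. \<sigma> permutes {1..m}} \<subseteq> copiesH m H {1..m}"
    unfolding copiesH_def Tc_def by (auto intro: permutes_imp_bij)
qed

lemma Tc_good:
  assumes "goodE m H" "\<sigma> permutes {1..m}"
  shows "goodE m (Tc \<sigma> H)"
  unfolding goodE_def Tc_def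
proof (intro conjI ballI)
  show "finite ((\<lambda>e. \<sigma> ` e) ` H)" using assms(1) by (simp add: goodE_def)
next
  fix e' assume "e' \<in> (\<lambda>e. \<sigma> ` e) ` H"
  then obtain e where e: "e \<in> H" "e' = \<sigma> ` e" by auto
  have es: "e \<subseteq> {1..m}" "card e = 2" using assms(1) e(1) by (auto simp: goodE_def)
  show "e' \<subseteq> {1..m}" using es(1) e(2) permutes_image[OF assms(2)] by auto
  show "card e' = 2" using e(2) es(2) card_image[OF permutes_inj_on[OF assms(2)]] by simp
qed

lemma copies_good:
  assumes "goodE m H" "H' \<in> copiesH m H {1..m}"
  shows "goodE m H'"
  using assms copies_perm[OF assms(1)] Tc_good by auto

lemma finite_perms[simp]: "finite {\<sigma>. \<sigma> permutes {1..(m::nat)}}"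
  by (rule finite_permutations) simp

lemma finite_perms'[simp]: "finite {\<sigma>. \<sigma> permutes {Suc 0..(m::nat)}}"
  by (rule finite_permutations) simp

lemma copies_finite:
  assumes "goodE m H"
  shows "finite (copiesH m H {1..m})"
  unfolding copies_perm[OF assms] by (rule finite_imageI[OF finite_perms])

lemma fiber_eq:
  assumes "\<sigma>0 permutes {1..m}"
  shows "{\<tau>. \<tau> permutes {1..m} \<and> Tc \<tau> H = Tc \<sigma>0 H}
     = (\<lambda>\<rho>. \<sigma>0 \<circ> \<rho>) ` {\<rho>. \<rho> permutes {1..m} \<and> Tc \<rho> H = H}"
proof
  show "{\<tau>. \<tau> permutes {1..m} \<and> Tc \<tau> H = Tc \<sigma>0 H}
     \<subseteq> (\<lambda>\<rho>. \<sigma>0 \<circ> \<rho>) ` {\<rho>. \<rho> permutes {1..m} \<and> Tc \<rho> H = H}"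
  proof
    fix \<tau> assume "\<tau> \<in> {\<tau>. \<tau> permutes {1..m} \<and> Tc \<tau> H = Tc \<sigma>0 H}"
    then have t: "\<tau> permutes {1..m}" "Tc \<tau> H = Tc \<sigma>0 H" by auto
    have p: "inv \<sigma>0 \<circ> \<tau> permutes {1..m}" by (rule permutes_compose[OF t(1) permutes_inv[OF assms]])
    have "Tc (inv \<sigma>0 \<circ> \<tau>) H = Tc (inv \<sigma>0 \<circ> \<sigma>0) H" by (simp only: Tc_comp t(2))
    also have "\<dots> = H" by (simp add: permutes_inv_o(2)[OF assms] Tc_id)
    finally have "Tc (inv \<sigma>0 \<circ> \<tau>) H = H" .
    moreover have "\<tau> = \<sigma>0 \<circ> (inv \<sigma>0 \<circ> \<tau>)"
      by (simp add: o_assoc permutes_inv_o(1)[OF assms])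
    ultimately show "\<tau> \<in> (\<lambda>\<rho>. \<sigma>0 \<circ> \<rho>) ` {\<rho>. \<rho> permutes {1..m} \<and> Tc \<rho> H = H}"
      using p by blast
  qed
next
  show "(\<lambda>\<rho>. \<sigma>0 \<circ> \<rho>) ` {\<rho>. \<rho> permutes {1..m} \<and> Tc \<rho> H = H}
     \<subseteq> {\<tau>. \<tau> permutes {1..m} \<and> Tc \<tau> H = Tc \<sigma>0 H}"
    using assms by (auto simp: Tc_comp intro: permutes_compose)
qed

lemma inj_comp_perm:
  assumes "\<sigma>0 permutes S"
  shows "inj_on (\<lambda>\<rho>. \<sigma>0 \<circ> \<rho>) A"
proof
  fix x y assume "\<sigma>0 \<circ> x = \<sigma>0 \<circ> y"
  then have "inv \<sigma>0 \<circ> (\<sigma>0 \<circ> x) = inv \<sigma>0 \<circ> (\<sigma>0 \<circ> y)" by simp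
  then show "x = y" by (simp add: o_assoc permutes_inv_o(2)[OF assms])
qed

lemma fiber_card:
  assumes "\<sigma>0 permutes {1..m}"
  shows "card {\<tau>. \<tau> permutes {1..m} \<and> Tc \<tau> H = Tc \<sigma>0 H} = card {\<rho>. \<rho> permutes {1..m} \<and> Tc \<rho> H = H}"
  unfolding fiber_eq[OF assms] by (rule card_image[OF inj_comp_perm[OF assms]])

lemma sum_copies:
  fixes F :: "nat set set \<Rightarrow> real"
  assumes "goodE m H"
  shows "(\<Sum>H'\<in>copiesH m H {1..m}. F H') * real (card {\<rho>. \<rho> permutes {1..m} \<and> Tc \<rho> H = H})
       = (\<Sum>\<sigma>\<in>{\<sigma>. \<sigma> permutes {1..m}}. F (Tc \<sigma> H))"
proof -
  let ?P = "{\<sigma>. \<sigma> permutes {1..m}}"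
  let ?a = "card {\<rho>. \<rho> permutes {1..m} \<and> Tc \<rho> H = H}"
  have "(\<Sum>\<sigma>\<in>?P. F (Tc \<sigma> H)) = (\<Sum>H'\<in>(\<lambda>\<sigma>. Tc \<sigma> H) ` ?P. \<Sum>\<sigma>\<in>{\<sigma>. \<sigma> \<in> ?P \<and> Tc \<sigma> H = H'}. F (Tc \<sigma> H))"
    by (rule sum.group[symmetric]) (auto intro: finite_perms)
  also have "\<dots> = (\<Sum>H'\<in>(\<lambda>\<sigma>. Tc \<sigma> H) ` ?P. F H' * real ?a)"
  proof (rule sum.cong[OF refl])
    fix H' assume "H' \<in> (\<lambda>\<sigma>. Tc \<sigma> H) ` ?P"
    then obtain \<sigma>0 where s0: "\<sigma>0 permutes {1..m}" "H' = Tc \<sigma>0 H" by auto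
    have "(\<Sum>\<sigma>\<in>{\<sigma>. \<sigma> \<in> ?P \<and> Tc \<sigma> H = H'}. F (Tc \<sigma> H)) = (\<Sum>\<sigma>\<in>{\<sigma>. \<sigma> \<in> ?P \<and> Tc \<sigma> H = H'}. F H')"
      by (rule sum.cong) auto
    also have "\<dots> = real (card {\<sigma>. \<sigma> \<in> ?P \<and> Tc \<sigma> H = H'}) * F H'" by simp
    also have "card {\<sigma>. \<sigma> \<in> ?P \<and> Tc \<sigma> H = H'} = ?a"
      using fiber_card[OF s0(1), of H] s0(2) by simp
    finally show "(\<Sum>\<sigma>\<in>{\<sigma>. \<sigma> \<in> ?P \<and> Tc \<sigma> H = H'}. F (Tc \<sigma> H)) = F H' * real ?a" by simp
  qed
  also have "\<dots> = (\<Sum>H'\<in>copiesH m H {1..m}. F H') * real ?a"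
    by (simp only: copies_perm[OF assms] sum_distrib_right)
  finally show ?thesis by simp
qed

lemma sum_inv:
  fixes h :: "(nat \<Rightarrow> nat) \<Rightarrow> real"
  shows "(\<Sum>\<sigma>\<in>{\<sigma>. \<sigma> permutes S}. h (inv \<sigma>)) = (\<Sum>\<sigma>\<in>{\<sigma>. \<sigma> permutes S}. h \<sigma>)"
proof (rule sum.reindex_bij_betw)
  show "bij_betw inv {\<sigma>. \<sigma> permutes S} {\<sigma>. \<sigma> permutes S}"
    by (rule bij_betw_byWitness[where f'=inv]) (auto simp: permutes_inv_inv permutes_inv)
qed

lemma card_fix_eq:
  assumes "i \<in> {1..(m::nat)}"
  shows "card {\<sigma>. \<sigma> permutes {1..m} \<and> \<sigma> 1 = i} = card {\<sigma>. \<sigma> permutes {1..m} \<and> \<sigma> 1 = 1}"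
proof -
  have m: "1 \<in> {1..m}" using assms by auto
  have tp: "Transposition.transpose 1 i permutes {1..m}" by (rule permutes_swap_id[OF m assms])
  have "{\<sigma>. \<sigma> permutes {1..m} \<and> \<sigma> 1 = i} = (\<lambda>\<rho>. Transposition.transpose 1 i \<circ> \<rho>) ` {\<sigma>. \<sigma> permutes {1..m} \<and> \<sigma> 1 = 1}"
  proof
    show "{\<sigma>. \<sigma> permutes {1..m} \<and> \<sigma> 1 = i} \<subseteq> (\<lambda>\<rho>. Transposition.transpose 1 i \<circ> \<rho>) ` {\<sigma>. \<sigma> permutes {1..m} \<and> \<sigma> 1 = 1}"
    proof
      fix \<tau> assume "\<tau> \<in> {\<sigma>. \<sigma> permutes {1..m} \<and> \<sigma> 1 = i}"
      then have t: "\<tau> permutes {1..m}" "\<tau> 1 = i" by auto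
      have "Transposition.transpose 1 i \<circ> \<tau> permutes {1..m}" by (rule permutes_compose[OF t(1) tp])
      moreover have "(Transposition.transpose 1 i \<circ> \<tau>) 1 = 1" using t(2) by simp
      moreover have "\<tau> = Transposition.transpose 1 i \<circ> (Transposition.transpose 1 i \<circ> \<tau>)" by (simp add: o_assoc)
      ultimately show "\<tau> \<in> (\<lambda>\<rho>. Transposition.transpose 1 i \<circ> \<rho>) ` {\<sigma>. \<sigma> permutes {1..m} \<and> \<sigma> 1 = 1}" by blast
    qed
  next
    show "(\<lambda>\<rho>. Transposition.transpose 1 i \<circ> \<rho>) ` {\<sigma>. \<sigma> permutes {1..m} \<and> \<sigma> 1 = 1} \<subseteq> {\<sigma>. \<sigma> permutes {1..m} \<and> \<sigma> 1 = i}"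
      using tp by (auto intro: permutes_compose)
  qed
  then show ?thesis by (simp only: card_image[OF inj_comp_perm[OF tp]])
qed

lemma sum_at1:
  fixes g :: "nat \<Rightarrow> real"
  assumes "m \<ge> 1"
  shows "(\<Sum>\<sigma>\<in>{\<sigma>. \<sigma> permutes {1..m}}. g (\<sigma> 1)) = real (card {\<sigma>. \<sigma> permutes {1..m} \<and> \<sigma> 1 = 1}) * (\<Sum>i\<in>{1..m}. g i)"
proof -
  let ?P = "{\<sigma>. \<sigma> permutes {1..m}}"
  have m: "1 \<in> {1..m}" using assms by auto
  have "(\<Sum>\<sigma>\<in>?P. g (\<sigma> 1)) = (\<Sum>i\<in>{1..m}. \<Sum>\<sigma>\<in>{\<sigma>. \<sigma> \<in> ?P \<and> \<sigma> 1 = i}. g (\<sigma> 1))"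
    using permutes_in_image[of _ "{1..m}" 1] m by (intro sum.group[symmetric]) auto
  also have "\<dots> = (\<Sum>i\<in>{1..m}. real (card {\<sigma>. \<sigma> permutes {1..m} \<and> \<sigma> 1 = 1}) * g i)"
  proof (rule sum.cong[OF refl])
    fix i assume i: "i \<in> {1..m}"
    have "(\<Sum>\<sigma>\<in>{\<sigma>. \<sigma> \<in> ?P \<and> \<sigma> 1 = i}. g (\<sigma> 1)) = (\<Sum>\<sigma>\<in>{\<sigma>. \<sigma> \<in> ?P \<and> \<sigma> 1 = i}. g i)"
      by (rule sum.cong) auto
    also have "\<dots> = real (card {\<sigma>. \<sigma> permutes {1..m} \<and> \<sigma> 1 = i}) * g i" by simp
    finally show "(\<Sum>\<sigma>\<in>{\<sigma>. \<sigma> \<in> ?P \<and> \<sigma> 1 = i}. g (\<sigma> 1)) = real (card {\<sigma>. \<sigma> permutes {1..m} \<and> \<sigma> 1 = 1}) * g i"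
      using card_fix_eq[OF i] by simp
  qed
  finally show ?thesis by (simp add: sum_distrib_left)
qed

lemma card_pos_aut: "card {\<rho>. \<rho> permutes {1..(m::nat)} \<and> Tc \<rho> H = H} > 0"
proof -
  have "id \<in> {\<rho>. \<rho> permutes {1..m} \<and> Tc \<rho> H = H}" by (simp add: Tc_id)
  moreover have "finite {\<rho>. \<rho> permutes {1..m} \<and> Tc \<rho> H = H}"
    by (rule finite_subset[OF _ finite_perms[of m]]) auto
  ultimately show ?thesis by (subst card_gt_0_iff) blast
qed

lemma card_pos_fix: "card {\<sigma>. \<sigma> permutes {1..(m::nat)} \<and> \<sigma> 1 = 1} > 0"
proof -
  have "id \<in> {\<sigma>. \<sigma> permutes {1..m} \<and> \<sigma> 1 = 1}" by simp
  moreover have "finite {\<sigma>. \<sigma> permutes {1..m} \<and> \<sigma> 1 = 1}"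
    by (rule finite_subset[OF _ finite_perms[of m]]) auto
  ultimately show ?thesis by (subst card_gt_0_iff) blast
qed




context wsetup begin

lemma w_minmax:
  assumes "p \<noteq> q" "u p \<in> {0..1}" "u q \<in> {0..1}"
  shows "w (u (Min {p,q})) (u (Max {p,q})) = w (u p) (u q)"
proof (cases "p < q")
  case True then show ?thesis by simp
next
  case False
  then have "q < p" using assms(1) by simp
  then have "Min {p,q} = q" "Max {p,q} = p" by auto
  then show ?thesis using w_sym[OF assms(3,2)] by simp
qed

lemma edgeprod_Tc:
  assumes H: "goodE m H" and p: "\<sigma> permutes {1..m}" and u: "\<And>k. k \<in> {1..m} \<Longrightarrow> u k \<in> {0..1}"
  shows "edgeprod w (Tc \<sigma> H) u = edgeprod w H (u \<circ> \<sigma>)"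
proof -
  have inj: "inj_on (\<lambda>e. \<sigma> ` e) H"
    using inj_image_eq_iff[OF permutes_inj[OF p]] by (auto simp: inj_on_def)
  have "edgeprod w (Tc \<sigma> H) u = (\<Prod>e\<in>H. w (u (Min (\<sigma> ` e))) (u (Max (\<sigma> ` e))))"
    unfolding edgeprod_def Tc_def by (simp add: prod.reindex[OF inj])
  also have "\<dots> = edgeprod w H (u \<circ> \<sigma>)"
    unfolding edgeprod_def
  proof (rule prod.cong[OF refl])
    fix e assume e: "e \<in> H"
    have c: "card e = 2" using H e by (auto simp: goodE_def)
    have ee: "e = {Min e, Max e}" and lt: "Min e < Max e" using card2_MinMax[OF c] by auto
    have mm: "Min e \<in> {1..m}" "Max e \<in> {1..m}" using goodE_MinMax[OF H e] by auto
    have s: "\<sigma> ` e = {\<sigma> (Min e), \<sigma> (Max e)}" by (subst ee) simp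
    have ne: "\<sigma> (Min e) \<noteq> \<sigma> (Max e)" using lt permutes_inj[OF p] by (metis less_irrefl injD)
    have r: "u (\<sigma> (Min e)) \<in> {0..1}" "u (\<sigma> (Max e)) \<in> {0..1}"
      using u permutes_in_image[OF p] mm by auto
    show "w (u (Min (\<sigma> ` e))) (u (Max (\<sigma> ` e))) = w ((u \<circ> \<sigma>) (Min e)) ((u \<circ> \<sigma>) (Max e))"
      unfolding s using w_minmax[OF ne r] by simp
  qed
  finally show ?thesis .
qed

lemma condE_Tc:
  assumes H: "goodE m H" and p: "\<sigma> permutes {1..m}" and j: "j \<in> {1..m}" and x: "x \<in> {0..1}"
  shows "condE m (edgeprod w (Tc \<sigma> H)) {\<sigma> j} (\<lambda>_. x) = condE m (edgeprod w H) {j} (\<lambda>_. x)"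
proof -
  define I where "I = {1..m} - {j}"
  define K where "K = {1..m} - {\<sigma> j}"
  define R where "R = (\<lambda>\<omega>::nat\<Rightarrow>real. \<lambda>n\<in>I. \<omega> (\<sigma> n))"
  have sj: "\<sigma> j \<in> {1..m}" using permutes_in_image[OF p] j by simp
  have injI: "inj_on \<sigma> I" using permutes_inj_on[OF p] .
  have fI: "\<sigma> \<in> I \<rightarrow> K"
    using permutes_in_image[OF p] permutes_inj[OF p] unfolding I_def K_def by (auto dest: injD)
  have dist: "distr (PiM K (\<lambda>_. unifM)) (PiM I (\<lambda>_. unifM)) R = PiM I (\<lambda>_. unifM)"
    using distr_PiM_reindex[of K "\<lambda>_. unifM" \<sigma> I, OF prob_unifM injI fI] unfolding R_def by simp
  have Rm: "R \<in> measurable (PiM K (\<lambda>_. unifM)) (PiM I (\<lambda>_. unifM))"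
    unfolding R_def
  proof (rule measurable_restrict)
    fix i assume "i \<in> I"
    then have "\<sigma> i \<in> K" using fI by auto
    then show "(\<lambda>\<omega>. \<omega> (\<sigma> i)) \<in> measurable (PiM K (\<lambda>_. unifM)) unifM"
      by (rule measurable_component_singleton)
  qed
  have gm: "(\<lambda>v. edgeprod w H (\<lambda>i. if i = j then x else v i)) \<in> borel_measurable (PiM I (\<lambda>_. unifM))"
    using measurable_comp[OF measurable_Pair1'[of x unifM] E_meas_pair[OF H j]] x
    unfolding comp_def fst_conv snd_conv I_def by simp
  have "condE m (edgeprod w H) {j} (\<lambda>_. x) = (\<integral>v. edgeprod w H (\<lambda>i. if i = j then x else v i) \<partial>PiM I (\<lambda>_. unifM))"
    unfolding condE_single I_def ..
  also have "\<dots> = (\<integral>v. edgeprod w H (\<lambda>i. if i = j then x else v i) \<partial>distr (PiM K (\<lambda>_. unifM)) (PiM I (\<lambda>_. unifM)) R)"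
    by (simp only: dist)
  also have "\<dots> = (\<integral>v. edgeprod w H (\<lambda>i. if i = j then x else R v i) \<partial>PiM K (\<lambda>_. unifM))"
    by (rule integral_distr[OF Rm gm])
  also have "\<dots> = (\<integral>v. edgeprod w (Tc \<sigma> H) (\<lambda>i. if i = \<sigma> j then x else v i) \<partial>PiM K (\<lambda>_. unifM))"
  proof (rule Bochner_Integration.integral_cong[OF refl])
    fix v assume v: "v \<in> space (PiM K (\<lambda>_. unifM))"
    have u: "\<And>k. k \<in> {1..m} \<Longrightarrow> (\<lambda>i. if i = \<sigma> j then x else v i) k \<in> {0..1}"
      using x space_PiU_in[OF v] unfolding K_def by auto
    have "edgeprod w (Tc \<sigma> H) (\<lambda>i. if i = \<sigma> j then x else v i)
        = edgeprod w H ((\<lambda>i. if i = \<sigma> j then x else v i) \<circ> \<sigma>)"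
      by (rule edgeprod_Tc[OF H p u])
    also have "\<dots> = edgeprod w H (\<lambda>i. if i = j then x else R v i)"
    proof (rule edgeprod_cong[where A="{1..m}"])
      show "\<forall>e\<in>H. Min e \<in> {1..m} \<and> Max e \<in> {1..m}" using goodE_MinMax[OF H] by blast
      fix i assume i: "i \<in> {1..m}"
      have "\<sigma> i = \<sigma> j \<longleftrightarrow> i = j" using permutes_inj[OF p] by (auto dest: injD)
      then show "((\<lambda>i. if i = \<sigma> j then x else v i) \<circ> \<sigma>) i = (\<lambda>i. if i = j then x else R v i) i"
        using i unfolding R_def I_def by auto
    qed
    finally show "edgeprod w H (\<lambda>i. if i = j then x else R v i) = edgeprod w (Tc \<sigma> H) (\<lambda>i. if i = \<sigma> j then x else v i)" by simp
  qed
  also have "\<dots> = condE m (edgeprod w (Tc \<sigma> H)) {\<sigma> j} (\<lambda>_. x)"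
    unfolding condE_single K_def ..
  finally show ?thesis by simp
qed

end



context wsetup begin

lemma K_sum:
  assumes H: "goodE m H" and m: "1 \<le> m" and x: "x \<in> {0..1}"
  shows "condE m (kernelH w m H) {1} (\<lambda>_. x) = (\<Sum>H'\<in>copiesH m H {1..m}. condE m (edgeprod w H') {1} (\<lambda>_. x))"
proof -
  have j: "1 \<in> {1..m}" using m by simp
  show ?thesis
    unfolding condE_single kernelH_def
    by (rule Bochner_Integration.integral_sum) (rule E_int[OF copies_good[OF H] j x])
qed

definition "aH H = card {\<rho>. \<rho> permutes {1..m} \<and> Tc \<rho> H = H}"
definition "c1 = card {\<sigma>. \<sigma> permutes {1..m} \<and> \<sigma> 1 = 1}"

lemma K_prop:
  assumes H: "goodE m H" and m: "1 \<le> m" and x: "x \<in> {0..1}"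
  shows "condE m (kernelH w m H) {1} (\<lambda>_. x) = (real c1 / real (aH H)) * (\<Sum>i\<in>{1..m}. condE m (edgeprod w H) {i} (\<lambda>_. x))"
proof -
  let ?P = "{\<sigma>. \<sigma> permutes {1..m}}"
  let ?G = "\<lambda>i. condE m (edgeprod w H) {i} (\<lambda>_. x)"
  have j: "1 \<in> {1..m}" using m by simp
  have "condE m (kernelH w m H) {1} (\<lambda>_. x) * real (aH H)
      = (\<Sum>\<sigma>\<in>?P. condE m (edgeprod w (Tc \<sigma> H)) {1} (\<lambda>_. x))"
    unfolding K_sum[OF H m x] aH_def by (rule sum_copies[OF H])
  also have "\<dots> = (\<Sum>\<sigma>\<in>?P. ?G (inv \<sigma> 1))"
  proof (rule sum.cong[OF refl])
    fix \<sigma> assume "\<sigma> \<in> ?P"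
    then have p: "\<sigma> permutes {1..m}" by simp
    have ij: "inv \<sigma> 1 \<in> {1..m}" using permutes_in_image[OF permutes_inv[OF p]] j by simp
    have "\<sigma> (inv \<sigma> 1) = 1" by (rule permutes_inverses(1)[OF p])
    then show "condE m (edgeprod w (Tc \<sigma> H)) {1} (\<lambda>_. x) = ?G (inv \<sigma> 1)"
      using condE_Tc[OF H p ij x] by simp
  qed
  also have "\<dots> = (\<Sum>\<sigma>\<in>?P. ?G (\<sigma> 1))"
    by (rule sum_inv[where h="\<lambda>\<sigma>. ?G (\<sigma> 1)"])
  also have "\<dots> = real c1 * (\<Sum>i\<in>{1..m}. ?G i)"
    unfolding c1_def by (rule sum_at1[OF m])
  finally have eq: "condE m (kernelH w m H) {1} (\<lambda>_. x) * real (aH H) = real c1 * (\<Sum>i\<in>{1..m}. ?G i)" .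
  have "real (aH H) > 0" unfolding aH_def using card_pos_aut by simp
  with eq show ?thesis by (simp add: field_simps)
qed

lemma C_pos: "real c1 / real (aH H) > 0"
  unfolding c1_def aH_def using card_pos_aut[of m H] card_pos_fix[of m] by simp

lemma E_meas_full:
  assumes H: "goodE m H"
  shows "edgeprod w H \<in> borel_measurable (PiM {1..m} (\<lambda>_. unifM))"
  unfolding edgeprod_def
proof (rule borel_measurable_prod)
  fix e assume "e \<in> H"
  then have a: "Min e \<in> {1..m}" and b: "Max e \<in> {1..m}" using goodE_MinMax[OF H] by auto
  have "(\<lambda>u. (u (Min e), u (Max e))) \<in> measurable (PiM {1..m} (\<lambda>_. unifM)) (unifM \<Otimes>\<^sub>M unifM)"
    using measurable_component_singleton[OF a] measurable_component_singleton[OF b]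
    by (intro measurable_Pair) auto
  from measurable_comp[OF this w_meas]
  show "(\<lambda>u. w (u (Min e)) (u (Max e))) \<in> borel_measurable (PiM {1..m} (\<lambda>_. unifM))"
    by (simp add: comp_def)
qed

lemma G_int_eq:
  assumes H: "goodE m H" and i: "i \<in> {1..m}"
  shows "(\<integral>y. condE m (edgeprod w H) {i} (\<lambda>_. y) \<partial>unifM) = (\<integral>u. edgeprod w H u \<partial>unifPi {1..m})"
proof -
  define J where "J = {1..m} - {i}"
  have iJ: "insert i J = {1..m}" "i \<notin> J" "finite J" using i unfolding J_def by auto
  interpret PS: product_prob_space "\<lambda>_::nat. unifM"
    by (intro product_prob_space.intro product_sigma_finite.intro product_prob_space_axioms.intro
        prob_space_imp_sigma_finite prob_unifM)
  interpret PP: pair_sigma_finite unifM "PiM J (\<lambda>_. unifM)"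
    by (intro pair_sigma_finite.intro prob_space_imp_sigma_finite prob_unifM prob_PiU)
  interpret PM: prob_space "PiM {1..m} (\<lambda>_. unifM)" by (rule prob_PiU)
  interpret PPM: prob_space "unifM \<Otimes>\<^sub>M PiM J (\<lambda>_. unifM)"
    by (intro prob_space_pair prob_unifM prob_PiU)
  have intS: "integrable (PiM (insert i J) (\<lambda>_. unifM)) (edgeprod w H)"
    unfolding iJ(1)
  proof (rule PM.integrable_const_bound[where B=1])
    show "AE u in PiM {1..m} (\<lambda>_. unifM). norm (edgeprod w H u) \<le> 1"
    proof (rule AE_I2)
      fix u assume u: "u \<in> space (PiM {1..m} (\<lambda>_. unifM))"
      have "\<forall>e\<in>H. u (Min e) \<in> {0..1} \<and> u (Max e) \<in> {0..1}"
        using goodE_MinMax[OF H] space_PiU_in[OF u] by blast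
      then show "norm (edgeprod w H u) \<le> 1" using edgeprod_bounds[of w, OF w_range] by (simp add: abs_le_iff)
    qed
  qed (rule E_meas_full[OF H])
  have intP: "integrable (unifM \<Otimes>\<^sub>M PiM J (\<lambda>_. unifM)) (case_prod (\<lambda>y v. edgeprod w H (\<lambda>k. if k = i then y else v k)))"
  proof (rule PPM.integrable_const_bound[where B=1])
    have "case_prod (\<lambda>y v. edgeprod w H (\<lambda>k. if k = i then y else v k)) = (\<lambda>p. edgeprod w H (\<lambda>k. if k = i then fst p else snd p k))"
      by (rule ext) (simp only: case_prod_beta)
    then show "case_prod (\<lambda>y v. edgeprod w H (\<lambda>k. if k = i then y else v k)) \<in> borel_measurable (unifM \<Otimes>\<^sub>M PiM J (\<lambda>_. unifM))"
      using E_meas_pair[OF H i] unfolding J_def by simp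
    show "AE p in unifM \<Otimes>\<^sub>M PiM J (\<lambda>_. unifM). norm (case_prod (\<lambda>y v. edgeprod w H (\<lambda>k. if k = i then y else v k)) p) \<le> 1"
    proof (rule AE_I2)
      fix p assume p: "p \<in> space (unifM \<Otimes>\<^sub>M PiM J (\<lambda>_. unifM))"
      then obtain y v where pv: "p = (y, v)" "y \<in> {0..1}" "v \<in> space (PiM ({1..m}-{i}) (\<lambda>_. unifM))"
        unfolding space_pair_measure J_def by auto
      show "norm (case_prod (\<lambda>y v. edgeprod w H (\<lambda>k. if k = i then y else v k)) p) \<le> 1"
        using edgeprod_bounds[of w, OF w_range edge_inrange[OF H i pv(2,3)]] pv(1) by (simp add: abs_le_iff)
    qed
  qed
  have "(\<integral>u. edgeprod w H u \<partial>unifPi {1..m}) = (\<integral>u. edgeprod w H u \<partial>PiM (insert i J) (\<lambda>_. unifM))"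
    unfolding unifPi_def iJ(1) ..
  also have "\<dots> = (\<integral>v. (\<integral>y. edgeprod w H (v(i:=y)) \<partial>unifM) \<partial>PiM J (\<lambda>_. unifM))"
    by (rule PS.product_integral_insert[OF iJ(3) iJ(2) intS])
  also have "\<dots> = (\<integral>v. (\<integral>y. edgeprod w H (\<lambda>k. if k = i then y else v k) \<partial>unifM) \<partial>PiM J (\<lambda>_. unifM))"
    by (simp add: fun_upd_def)
  also have "\<dots> = (\<integral>y. (\<integral>v. edgeprod w H (\<lambda>k. if k = i then y else v k) \<partial>PiM J (\<lambda>_. unifM)) \<partial>unifM)"
    by (rule PP.Fubini_integral[OF intP])
  also have "\<dots> = (\<integral>y. condE m (edgeprod w H) {i} (\<lambda>_. y) \<partial>unifM)"
    unfolding condE_single J_def ..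
  finally show ?thesis by simp
qed

end



context wsetup begin

definition "Kf H x = condE m (kernelH w m H) {1} (\<lambda>_. x)"
definition "Sf H x = (\<Sum>i\<in>{1..m}. condE m (edgeprod w H) {i} (\<lambda>_. x))"

lemma Sf_meas: "goodE m H \<Longrightarrow> Sf H \<in> borel_measurable unifM"
  unfolding Sf_def by (rule borel_measurable_sum) (rule E_meas)

lemma Sf_bound: "goodE m H \<Longrightarrow> x \<in> {0..1} \<Longrightarrow> 0 \<le> Sf H x \<and> Sf H x \<le> real m"
proof -
  assume H: "goodE m H" and x: "x \<in> {0..1}"
  have b: "\<And>i. i \<in> {1..m} \<Longrightarrow> 0 \<le> condE m (edgeprod w H) {i} (\<lambda>_. x) \<and> condE m (edgeprod w H) {i} (\<lambda>_. x) \<le> 1"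
    using E_bounds[OF H _ x] by blast
  have "Sf H x \<le> (\<Sum>i\<in>{1..m}. 1)" unfolding Sf_def by (rule sum_mono) (use b in blast)
  moreover have "0 \<le> Sf H x" unfolding Sf_def by (rule sum_nonneg) (use b in blast)
  ultimately show ?thesis by simp
qed

lemma Kf_eq: "goodE m H \<Longrightarrow> 1 \<le> m \<Longrightarrow> x \<in> {0..1} \<Longrightarrow> Kf H x = (real c1 / real (aH H)) * Sf H x"
  unfolding Kf_def Sf_def by (rule K_prop)

lemma Kf_meas:
  assumes H: "goodE m H" and m: "1 \<le> m"
  shows "Kf H \<in> borel_measurable unifM"
proof -
  have "(\<lambda>x. (real c1 / real (aH H)) * Sf H x) \<in> borel_measurable unifM"
    using Sf_meas[OF H] by simp
  then show ?thesis by (subst measurable_cong[where g="\<lambda>x. (real c1 / real (aH H)) * Sf H x"]) (auto simp: Kf_eq[OF H m])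
qed

lemma Kf_bound:
  assumes H: "goodE m H" and m: "1 \<le> m" and x: "x \<in> {0..1}"
  shows "\<bar>Kf H x\<bar> \<le> (real c1 / real (aH H)) * real m"
proof -
  have C: "0 < real c1 / real (aH H)" by (rule C_pos)
  have s: "0 \<le> Sf H x" "Sf H x \<le> real m" using Sf_bound[OF H x] by auto
  have "\<bar>Kf H x\<bar> = (real c1 / real (aH H)) * Sf H x"
    unfolding Kf_eq[OF H m x] using C s by (simp add: abs_mult)
  also have "\<dots> \<le> (real c1 / real (aH H)) * real m"
    by (rule mult_left_mono[OF s(2)]) (use C in simp)
  finally show ?thesis .
qed

lemma condE1_eq: "condE m F {1} u = condE m F {1} (\<lambda>_. u 1)"
proof -
  have "\<And>v. (\<lambda>i. if i \<in> {1} then u i else v i) = (\<lambda>i. if i \<in> {1} then (\<lambda>_. u 1) i else v i)"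
    by (rule ext) auto
  then show ?thesis unfolding condE_def by simp
qed

lemma Var_transfer:
  assumes H: "goodE m H" and m: "1 \<le> m"
  shows "Var (unifPi {1}) (condE m (kernelH w m H) {1}) = Var unifM (Kf H)"
proof -
  have e1: "condE m (kernelH w m H) {1} = (\<lambda>u. Kf H (u 1))"
    unfolding Kf_def by (rule ext) (rule condE1_eq)
  have dist: "distr (PiM {1::nat} (\<lambda>_. unifM)) unifM (\<lambda>\<omega>. \<omega> 1) = unifM"
    using distr_PiM_component[of "{1::nat}" "\<lambda>_. unifM" "1::nat"] prob_unifM by simp
  have pm: "(\<lambda>\<omega>. \<omega> 1) \<in> measurable (PiM {1::nat} (\<lambda>_. unifM)) unifM"
    by (rule measurable_component_singleton) simp
  have tr: "\<And>g::real\<Rightarrow>real. g \<in> borel_measurable unifM \<Longrightarrow> (\<integral>u. g (u 1) \<partial>PiM {1::nat} (\<lambda>_. unifM)) = (\<integral>x. g x \<partial>unifM)"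
  proof -
    fix g :: "real \<Rightarrow> real" assume g: "g \<in> borel_measurable unifM"
    have "(\<integral>u. g (u 1) \<partial>PiM {1::nat} (\<lambda>_. unifM)) = (\<integral>x. g x \<partial>unifM)"
      using integral_distr[OF pm g] unfolding dist by simp
    then show "(\<integral>u. g (u 1) \<partial>PiM {1::nat} (\<lambda>_. unifM)) = (\<integral>x. g x \<partial>unifM)" by simp
  qed
  have km: "Kf H \<in> borel_measurable unifM" by (rule Kf_meas[OF H m])
  have mu: "(\<integral>u. Kf H (u 1) \<partial>PiM {1::nat} (\<lambda>_. unifM)) = (\<integral>x. Kf H x \<partial>unifM)"
    by (rule tr[OF km])
  have "(\<lambda>x. (Kf H x - (\<integral>y. Kf H y \<partial>unifM))\<^sup>2) \<in> borel_measurable unifM"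
    using km by measurable
  from tr[OF this] show ?thesis
    unfolding Var_def e1 unifPi_def mu .
qed

lemma Var0_iff:
  assumes H: "goodE m H" and m: "1 \<le> m"
  shows "Var unifM (Kf H) = 0 \<longleftrightarrow> (\<exists>c. AE x in unifM. Kf H x = c)"
proof -
  interpret U: prob_space unifM by (rule prob_unifM)
  have km: "Kf H \<in> borel_measurable unifM" by (rule Kf_meas[OF H m])
  define B where "B = (real c1 / real (aH H)) * real m"
  have bnd: "\<And>x. x \<in> space unifM \<Longrightarrow> \<bar>Kf H x\<bar> \<le> B" unfolding B_def using Kf_bound[OF H m] by simp
  have ki: "integrable unifM (Kf H)"
    by (rule U.integrable_const_bound[where B=B]) (auto intro!: AE_I2 bnd km)
  show ?thesis
  proof
    assume v: "Var unifM (Kf H) = 0"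
    define \<mu> where "\<mu> = (\<integral>y. Kf H y \<partial>unifM)"
    have sm: "(\<lambda>x. (Kf H x - \<mu>)\<^sup>2) \<in> borel_measurable unifM" using km by measurable
    have si: "integrable unifM (\<lambda>x. (Kf H x - \<mu>)\<^sup>2)"
    proof (rule U.integrable_const_bound[where B="(B + \<bar>\<mu>\<bar>)\<^sup>2"])
      show "AE x in unifM. norm ((Kf H x - \<mu>)\<^sup>2) \<le> (B + \<bar>\<mu>\<bar>)\<^sup>2"
      proof (rule AE_I2)
        fix x assume x: "x \<in> space unifM"
        have "\<bar>Kf H x - \<mu>\<bar> \<le> B + \<bar>\<mu>\<bar>" using bnd[OF x] by linarith
        then have "\<bar>Kf H x - \<mu>\<bar>\<^sup>2 \<le> (B + \<bar>\<mu>\<bar>)\<^sup>2" by (rule power_mono) simp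
        then show "norm ((Kf H x - \<mu>)\<^sup>2) \<le> (B + \<bar>\<mu>\<bar>)\<^sup>2" by simp
      qed
    qed (rule sm)
    have "AE x in unifM. (Kf H x - \<mu>)\<^sup>2 = 0"
      using integral_nonneg_eq_0_iff_AE[OF si] v unfolding Var_def \<mu>_def by simp
    then have "AE x in unifM. Kf H x = \<mu>" by (rule AE_mp) (auto intro!: AE_I2)
    then show "\<exists>c. AE x in unifM. Kf H x = c" by blast
  next
    assume "\<exists>c. AE x in unifM. Kf H x = c"
    then obtain c where c: "AE x in unifM. Kf H x = c" by blast
    have "(\<integral>y. Kf H y \<partial>unifM) = (\<integral>y. c \<partial>unifM)"
      by (rule integral_cong_AE[OF km _ c]) simp
    then have mu: "(\<integral>y. Kf H y \<partial>unifM) = c" using U.prob_space by simp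
    have "(\<integral>x. (Kf H x - c)\<^sup>2 \<partial>unifM) = (\<integral>x. 0 \<partial>unifM)"
      by (rule integral_cong_AE) (use km in measurable, simp, use c in \<open>auto elim: AE_mp intro!: AE_I2\<close>)
    then show "Var unifM (Kf H) = 0" unfolding Var_def mu by simp
  qed
qed

end



context wsetup begin

lemma G_integrable:
  assumes H: "goodE m H" and i: "i \<in> {1..m}"
  shows "integrable unifM (\<lambda>x. condE m (edgeprod w H) {i} (\<lambda>_. x))"
proof -
  interpret U: prob_space unifM by (rule prob_unifM)
  show ?thesis
  proof (rule U.integrable_const_bound[where B=1])
    show "AE x in unifM. norm (condE m (edgeprod w H) {i} (\<lambda>_. x)) \<le> 1"
      by (rule AE_I2) (use E_bounds[OF H i] in \<open>auto simp: abs_le_iff\<close>)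
  qed (rule E_meas[OF H i])
qed

lemma Sf_int:
  assumes H: "goodE m H" and m1: "1 \<le> m"
  shows "(\<integral>x. (1 / real m) * Sf H x \<partial>unifM) = (\<integral>u. edgeprod w H u \<partial>unifPi {1..m})"
proof -
  have False: "m \<noteq> 0" using m1 by simp
  have "(\<integral>x. (1 / real m) * Sf H x \<partial>unifM) = (1 / real m) * (\<integral>x. Sf H x \<partial>unifM)"
    by (rule integral_mult_right_zero)
  also have "(\<integral>x. Sf H x \<partial>unifM) = (\<Sum>i\<in>{1..m}. \<integral>x. condE m (edgeprod w H) {i} (\<lambda>_. x) \<partial>unifM)"
    unfolding Sf_def by (rule Bochner_Integration.integral_sum) (rule G_integrable[OF H])
  also have "\<dots> = (\<Sum>i\<in>{1..m}. \<integral>u. edgeprod w H u \<partial>unifPi {1..m})"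
    by (rule sum.cong[OF refl]) (rule G_int_eq[OF H])
  also have "\<dots> = real m * (\<integral>u. edgeprod w H u \<partial>unifPi {1..m})" by simp
  finally show ?thesis using False by simp
qed

lemma iii_iv:
  assumes H: "goodE m H" and m: "1 \<le> m"
  shows "(\<exists>c. AE x in unifM. Kf H x = c) \<longleftrightarrow>
     (AE x in unifM. (1 / real m) * Sf H x = (\<integral>u. edgeprod w H u \<partial>unifPi {1..m}))"
proof -
  interpret U: prob_space unifM by (rule prob_unifM)
  define D where "D = (real c1 / real (aH H)) * real m"
  define E where "E = (\<integral>u. edgeprod w H u \<partial>unifPi {1..m})"
  have Dpos: "D > 0" unfolding D_def by (rule mult_pos_pos[OF C_pos]) (use m in simp)
  have KD: "\<And>x. x \<in> space unifM \<Longrightarrow> Kf H x = D * ((1 / real m) * Sf H x)"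
    using Kf_eq[OF H m] m unfolding D_def by simp
  have Am: "(\<lambda>x. (1 / real m) * Sf H x) \<in> borel_measurable unifM" using Sf_meas[OF H] by simp
  show ?thesis unfolding E_def[symmetric]
  proof
    assume "\<exists>c. AE x in unifM. Kf H x = c"
    then obtain c where c: "AE x in unifM. Kf H x = c" by blast
    have A: "AE x in unifM. (1 / real m) * Sf H x = c / D"
      using c by (rule AE_mp) (rule AE_I2, use KD Dpos in \<open>auto simp: field_simps\<close>)
    have "(\<integral>x. (1 / real m) * Sf H x \<partial>unifM) = (\<integral>x. c / D \<partial>unifM)"
      by (rule integral_cong_AE[OF Am _ A]) simp
    then have "E = c / D" using Sf_int[OF H m] U.prob_space unfolding E_def by simp
    then show "AE x in unifM. (1 / real m) * Sf H x = E" using A by simp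
  next
    assume A: "AE x in unifM. (1 / real m) * Sf H x = E"
    have "AE x in unifM. Kf H x = D * E"
      using A by (rule AE_mp) (rule AE_I2, use KD in auto)
    then show "\<exists>c. AE x in unifM. Kf H x = c" by blast
  qed
qed

end



lemma choose_shift: "k \<le> b \<Longrightarrow> b \<le> a \<Longrightarrow> (a - k) choose (b - k) \<le> a choose (b::nat)"
proof (induction k)
  case 0 show ?case by simp
next
  case (Suc k)
  have e: "a - k = Suc (a - Suc k)" "b - k = Suc (b - Suc k)" using Suc.prems by auto
  have "(a - Suc k) choose (b - Suc k) \<le> (a - k) choose (b - k)" unfolding e by simp
  also have "\<dots> \<le> a choose b" using Suc by simp
  finally show ?case .
qed

lemma choose_pow_real: "real (n choose k) \<le> real n ^ k"
proof (cases "k \<le> n")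
  case True
  then have "n choose k \<le> n ^ k" by (rule binomial_le_pow)
  then show ?thesis by (metis of_nat_le_iff of_nat_power)
next
  case False then show ?thesis by (simp add: binomial_eq_0)
qed

lemma O_part:
  fixes V :: "nat \<Rightarrow> real"
  assumes r: "r \<le> m"
  shows "(\<lambda>n. real (m choose r) * real (n choose m) * real ((n - r) choose (m - r)) * V r)
     \<in> O(\<lambda>n. real n ^ (2 * m - r))"
proof (rule bigoI[where c="real (m choose r) * \<bar>V r\<bar>"], rule always_eventually, rule allI)
  fix n :: nat
  have a: "real (n choose m) \<le> real n ^ m" by (rule choose_pow_real)
  have "real ((n - r) choose (m - r)) \<le> real (n - r) ^ (m - r)" by (rule choose_pow_real)
  also have "\<dots> \<le> real n ^ (m - r)" by (rule power_mono) auto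
  finally have b: "real ((n - r) choose (m - r)) \<le> real n ^ (m - r)" .
  have ab: "real (n choose m) * real ((n - r) choose (m - r)) \<le> real n ^ m * real n ^ (m - r)"
    by (rule mult_mono[OF a b]) auto
  have pw: "real n ^ m * real n ^ (m - r) = real n ^ (2 * m - r)"
  proof -
    have "m + (m - r) = 2 * m - r" using r by simp
    then show ?thesis by (metis power_add)
  qed
  have "norm (real (m choose r) * real (n choose m) * real ((n - r) choose (m - r)) * V r)
      = (real (m choose r) * \<bar>V r\<bar>) * (real (n choose m) * real ((n - r) choose (m - r)))"
    by (simp add: abs_mult)
  also have "\<dots> \<le> (real (m choose r) * \<bar>V r\<bar>) * (real n ^ m * real n ^ (m - r))"
    by (rule mult_left_mono[OF ab]) simp
  also have "\<dots> = (real (m choose r) * \<bar>V r\<bar>) * norm (real n ^ (2 * m - r))"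
    unfolding pw by simp
  finally show "norm (real (m choose r) * real (n choose m) * real ((n - r) choose (m - r)) * V r)
      \<le> (real (m choose r) * \<bar>V r\<bar>) * norm (real n ^ (2 * m - r))" .
qed

lemma ratio_small:
  fixes V :: "nat \<Rightarrow> real" and m :: nat and c :: real
  defines "s \<equiv> \<lambda>n r. real (m choose r) * real (n choose m) * real ((n - r) choose (m - r)) * V r"
  assumes m2: "2 \<le> m" and V1: "V 1 > 0" and c: "c > 0"
  shows "\<forall>\<^sub>F n in sequentially. (\<Sum>r=2..m. s n r) / s n 1 < c"
proof -
  define D where "D = (\<Sum>r=2..m. real (m choose r) * \<bar>V r\<bar>)"
  define K where "K = D * real (m - 1) / (real m * V 1)"
  have D0: "D \<ge> 0" unfolding D_def by (rule sum_nonneg) simp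
  have K0: "K \<ge> 0" unfolding K_def using D0 V1 m2 by simp
  have bound: "(\<Sum>r=2..m. s n r) / s n 1 \<le> K / (real n - 1)" if n: "n \<ge> m" for n
  proof -
    define X where "X = real (n choose m) * real ((n - 2) choose (m - 2))"
    have Xp: "X > 0" unfolding X_def using n by simp
    have n2: "n \<ge> 2" using n m2 by simp
    have tm: "\<bar>s n r\<bar> \<le> real (m choose r) * \<bar>V r\<bar> * X" if r: "r \<in> {2..m}" for r
    proof -
      have "(n - 2 - (r - 2)) choose (m - 2 - (r - 2)) \<le> (n - 2) choose (m - 2)"
        by (rule choose_shift) (use r n in auto)
      moreover have "n - 2 - (r - 2) = n - r" "m - 2 - (r - 2) = m - r" using r by auto
      ultimately have "real ((n - r) choose (m - r)) \<le> real ((n - 2) choose (m - 2))" by simp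
      then have "real (n choose m) * real ((n - r) choose (m - r)) \<le> real (n choose m) * real ((n - 2) choose (m - 2))"
        by (rule mult_left_mono) simp
      then have "(real (m choose r) * \<bar>V r\<bar>) * (real (n choose m) * real ((n - r) choose (m - r)))
          \<le> (real (m choose r) * \<bar>V r\<bar>) * X"
        unfolding X_def by (rule mult_left_mono) simp
      then show ?thesis unfolding s_def by (simp add: abs_mult mult_ac)
    qed
    have S: "(\<Sum>r=2..m. s n r) \<le> D * X"
    proof -
      have "(\<Sum>r=2..m. s n r) \<le> (\<Sum>r=2..m. \<bar>s n r\<bar>)" by (rule sum_mono) simp
      also have "\<dots> \<le> (\<Sum>r=2..m. real (m choose r) * \<bar>V r\<bar> * X)" by (rule sum_mono) (rule tm)
      also have "\<dots> = D * X" unfolding D_def by (simp add: sum_distrib_right)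
      finally show ?thesis .
    qed
    have id: "real ((n - 1) choose (m - 1)) * real (m - 1) = (real n - 1) * real ((n - 2) choose (m - 2))"
    proof -
      have "Suc (n - 2) * ((n - 2) choose (m - 2)) = (Suc (n - 2) choose Suc (m - 2)) * Suc (m - 2)"
        by (rule Suc_times_binomial_eq)
      moreover have "Suc (n - 2) = n - 1" "Suc (m - 2) = m - 1" using n2 m2 by auto
      ultimately have "(n - 1) * ((n - 2) choose (m - 2)) = ((n - 1) choose (m - 1)) * (m - 1)" by simp
      then have "real ((n - 1) * ((n - 2) choose (m - 2))) = real (((n - 1) choose (m - 1)) * (m - 1))" by simp
      then show ?thesis using n2 by (simp add: of_nat_diff)
    qed
    have s1: "s n 1 = real m * real (n choose m) * real ((n - 1) choose (m - 1)) * V 1"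
      unfolding s_def by simp
    have s1p: "s n 1 > 0" unfolding s1 using n m2 V1 by simp
    have s1X: "s n 1 * real (m - 1) = real m * V 1 * (real n - 1) * X"
      unfolding s1 X_def using id by (simp add: mult_ac)
    have "(\<Sum>r=2..m. s n r) / s n 1 \<le> D * X / s n 1"
      by (rule divide_right_mono[OF S]) (use s1p in simp)
    also have "\<dots> = K / (real n - 1)"
    proof -
      have m1: "real (m - 1) > 0" using m2 by simp
      have n1: "real n - 1 > 0" using n2 by simp
      have "D * X / s n 1 = D * X * real (m - 1) / (s n 1 * real (m - 1))" using m1 by simp
      also have "\<dots> = D * X * real (m - 1) / (real m * V 1 * (real n - 1) * X)" unfolding s1X ..
      also have "\<dots> = K / (real n - 1)" unfolding K_def using Xp V1 m2 n1 by (simp add: field_simps)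
      finally show ?thesis .
    qed
    finally show ?thesis .
  qed
  obtain N :: nat where N: "N \<ge> m" "real N > K / c + 1"
  proof
    show "max m (nat \<lceil>K / c\<rceil> + 2) \<ge> m" by simp
    have "real (nat \<lceil>K / c\<rceil> + 2) > K / c + 1" by linarith
    then show "real (max m (nat \<lceil>K / c\<rceil> + 2)) > K / c + 1" by (simp add: max_def)
  qed
  show ?thesis unfolding eventually_sequentially
  proof (intro exI allI impI)
    fix n assume n: "N \<le> n"
    then have nm: "n \<ge> m" using N by simp
    have big: "real n - 1 > K / c" using N n by linarith
    have n1: "real n - 1 > 0" using big K0 c by (smt (verit) divide_nonneg_pos)
    have "K / c * c < (real n - 1) * c" by (rule mult_strict_right_mono[OF big c])
    then have "K < c * (real n - 1)" using c by (simp add: field_simps)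
    then have "K / (real n - 1) < c" using n1 by (simp add: divide_less_eq)
    then show "(\<Sum>r=2..m. s n r) / s n 1 < c" using bound[OF nm] by linarith
  qed
qed




theorem lemmaA5:
  fixes w :: "real \<Rightarrow> real \<Rightarrow> real" and m :: nat and H :: "nat set set"
  assumes w_meas: "(\<lambda>(x, y). w x y) \<in> borel_measurable (unifM \<Otimes>\<^sub>M unifM)"
    and w_sym: "\<And>x y. x \<in> {0..1} \<Longrightarrow> y \<in> {0..1} \<Longrightarrow> w x y = w y x"
    and w_range: "\<And>x y. x \<in> {0..1} \<Longrightarrow> y \<in> {0..1} \<Longrightarrow> 0 \<le> w x y \<and> w x y \<le> 1"
    and m_ge: "m \<ge> 2"
    and H_graph: "H \<subseteq> {e. e \<subseteq> {1..m} \<and> card e = 2}"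
    and H_nonempty: "H \<noteq> {}"
  shows "(\<forall>r\<in>{1..m}. (\<lambda>n. sigma2 w m H n r) \<in> O(\<lambda>n. real n ^ (2 * m - r)))
    \<and> ((\<exists>c>0. \<forall>\<^sub>F n in sequentially. rho w m H n \<ge> ereal c)
          \<longleftrightarrow> (\<exists>n\<ge>m. sigma2 w m H n 1 = 0))
    \<and> ((\<exists>n\<ge>m. sigma2 w m H n 1 = 0) \<longleftrightarrow> (\<forall>n\<ge>m. sigma2 w m H n 1 = 0))
    \<and> ((\<forall>n\<ge>m. sigma2 w m H n 1 = 0)
          \<longleftrightarrow> (\<exists>c. AE x in unifM. condE m (kernelH w m H) {1} (\<lambda>_. x) = c))
    \<and> ((\<exists>c. AE x in unifM. condE m (kernelH w m H) {1} (\<lambda>_. x) = c)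
          \<longleftrightarrow> (AE x in unifM. (1 / real m) * (\<Sum>i=1..m. condE m (edgeprod w H) {i} (\<lambda>_. x))
                 = (\<integral>u. edgeprod w H u \<partial>unifPi {1..m})))"
proof -
  interpret W: wsetup w m
    using w_meas w_sym w_range by (simp add: wsetup_def)
  have H: "goodE m H"
  proof -
    have "H \<subseteq> Pow {1..m}" using H_graph by auto
    then have "finite H" by (rule finite_subset) simp
    then show ?thesis using H_graph unfolding goodE_def by auto
  qed
  have m1: "1 \<le> m" using m_ge by simp
  define V where "V r = Var (unifPi {1..r}) (condE m (kernelH w m H) {1..r})" for r
  have sig: "\<And>n r. sigma2 w m H n r = real (m choose r) * real (n choose m) * real ((n - r) choose (m - r)) * V r"
    unfolding sigma2_def V_def by simp
  have V1: "V 1 = Var unifM (W.Kf H)"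
    unfolding V_def using W.Var_transfer[OF H m1] by simp
  have V1nn: "V 1 \<ge> 0"
    unfolding V1 Var_def by (rule integral_nonneg_AE) simp
  have P1: "\<forall>r\<in>{1..m}. (\<lambda>n. sigma2 w m H n r) \<in> O(\<lambda>n. real n ^ (2 * m - r))"
    unfolding sig by (intro ballI O_part) simp
  have s1eq: "sigma2 w m H n 1 = 0 \<longleftrightarrow> V 1 = 0" if n: "n \<ge> m" for n
  proof -
    have "\<not> (n - Suc 0 < m - Suc 0)" using n by simp
    then show ?thesis unfolding sig using n m1 by simp
  qed
  have s1all: "sigma2 w m H n 1 = 0" if "V 1 = 0" for n
    unfolding sig using that by simp
  have E2: "(\<exists>n\<ge>m. sigma2 w m H n 1 = 0) \<longleftrightarrow> V 1 = 0"
    using s1eq by blast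
  have E3: "(\<forall>n\<ge>m. sigma2 w m H n 1 = 0) \<longleftrightarrow> V 1 = 0"
    using s1eq by blast
  have E4: "(\<exists>c. AE x in unifM. condE m (kernelH w m H) {1} (\<lambda>_. x) = c) \<longleftrightarrow> V 1 = 0"
    using W.Var0_iff[OF H m1] unfolding V1 W.Kf_def by simp
  have E5: "(\<exists>c. AE x in unifM. condE m (kernelH w m H) {1} (\<lambda>_. x) = c)
          \<longleftrightarrow> (AE x in unifM. (1 / real m) * (\<Sum>i=1..m. condE m (edgeprod w H) {i} (\<lambda>_. x))
                 = (\<integral>u. edgeprod w H u \<partial>unifPi {1..m}))"
    using W.iii_iv[OF H m1] unfolding W.Kf_def W.Sf_def .
  have E1: "(\<exists>c>0. \<forall>\<^sub>F n in sequentially. rho w m H n \<ge> ereal c) \<longleftrightarrow> V 1 = 0"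
  proof
    assume "\<exists>c>0. \<forall>\<^sub>F n in sequentially. rho w m H n \<ge> ereal c"
    then obtain c where c: "c > 0" "\<forall>\<^sub>F n in sequentially. rho w m H n \<ge> ereal c" by blast
    show "V 1 = 0"
    proof (rule ccontr)
      assume "V 1 \<noteq> 0"
      then have Vp: "V 1 > 0" using V1nn by simp
      have ev: "\<forall>\<^sub>F n in sequentially. (\<Sum>r=2..m. sigma2 w m H n r) / sigma2 w m H n 1 < c"
        using ratio_small[of m V c, OF m_ge Vp c(1)] unfolding sig by simp
      have "\<forall>\<^sub>F n in sequentially. rho w m H n \<ge> ereal c \<and>
          (\<Sum>r=2..m. sigma2 w m H n r) / sigma2 w m H n 1 < c \<and> n \<ge> m"
        by (rule eventually_conj[OF c(2) eventually_conj[OF ev eventually_ge_at_top]])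
      then obtain n where n: "rho w m H n \<ge> ereal c"
          "(\<Sum>r=2..m. sigma2 w m H n r) / sigma2 w m H n 1 < c" "n \<ge> m"
        unfolding eventually_sequentially by blast
      have "sigma2 w m H n 1 \<noteq> 0" using s1eq[OF n(3)] Vp by simp
      then have "rho w m H n = ereal ((\<Sum>r=2..m. sigma2 w m H n r) / sigma2 w m H n 1)"
        unfolding rho_def by simp
      then show False using n(1,2) by simp
    qed
  next
    assume "V 1 = 0"
    then have "\<And>n. rho w m H n = \<infinity>" unfolding rho_def using s1all by simp
    then show "\<exists>c>0. \<forall>\<^sub>F n in sequentially. rho w m H n \<ge> ereal c"
      by (intro exI[of _ 1]) simp
  qed
  show ?thesis using P1 E1 E2 E3 E4 E5 by blast
qed


end
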